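(* For every integer $k\ge 2$, $\mathsf{{Mod_k}_{tot}P}=\mathsf{Mod_kP}$.
   Context: An NPTM is a non-deterministic polynomial-time Turing machine. For an NPTM $M$ and input $x$, $acc_M(x)$ is the number of accepting paths of $M$ on $x$ and $tot_M(x)$ is the number of all computation paths of $M$ on $x$ minus $1$. $\#\mathsf{P}=\{acc_M\}$, $\mathsf{TotP}=\{tot_M\}$ over all NPTMs $M$. $\mathsf{Mod_kP}$ is the class of languages $L$ for which there is $f\in\#\mathsf{P}$ such that $x\in L\iff f(x)\not\equiv 0\pmod{k}$. $\mathsf{{Mod_k}_{tot}P}$ is defined identically with $f\in\mathsf{TotP}$. *)

theory Defs
  imports Main
begin

text \<open>States and tape symbols are
natural numbers; symbol 0 is the blank, the input bits False/True are written as 1/2.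
A transition (q, a, q', b, d) means: in state q reading a, go to state q', write b,
move the head by d (with d in {-1,0,1}). A configuration is (state, head position, tape).\<close>

record ntm =
  delta :: "(nat \<times> nat \<times> nat \<times> nat \<times> int) set"
  start :: nat
  accepting :: "nat set"

type_synonym config = "nat \<times> int \<times> (int \<Rightarrow> nat)"

definition step :: "ntm \<Rightarrow> config \<Rightarrow> config \<Rightarrow> bool" where
  "step M c c' \<longleftrightarrow> (case c of (q, h, t) \<Rightarrow>
     (\<exists>q' b d. (q, t h, q', b, d) \<in> delta M \<and> c' = (q', h + d, t(h := b))))"

definition halted :: "ntm \<Rightarrow> config \<Rightarrow> bool" where
  "halted M c \<longleftrightarrow> \<not> (\<exists>c'. step M c c')"

definition init :: "ntm \<Rightarrow> bool list \<Rightarrow> config" where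
  "init M x = (start M, 0,
     (\<lambda>i. if 0 \<le> i \<and> i < int (length x) then (if x ! nat i then 2 else 1) else 0))"

definition is_path :: "ntm \<Rightarrow> bool list \<Rightarrow> config list \<Rightarrow> bool" where
  "is_path M x cs \<longleftrightarrow> cs \<noteq> [] \<and> hd cs = init M x
     \<and> (\<forall>i. Suc i < length cs \<longrightarrow> step M (cs ! i) (cs ! Suc i))
     \<and> halted M (last cs)"

definition paths :: "ntm \<Rightarrow> bool list \<Rightarrow> config list set" where
  "paths M x = {cs. is_path M x cs}"

definition nptm :: "ntm \<Rightarrow> bool" where
  "nptm M \<longleftrightarrow> finite (delta M)
     \<and> (\<forall>(q, a, q', b, d) \<in> delta M. d \<in> {-1, 0, 1})
     \<and> (\<exists>c::nat. \<forall>x n cfg. (step M ^^ n) (init M x) cfg \<longrightarrow> n \<le> c * length x ^ c + c)"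

definition acc :: "ntm \<Rightarrow> bool list \<Rightarrow> nat" where
  "acc M x = card {cs \<in> paths M x. fst (last cs) \<in> accepting M}"

definition tot :: "ntm \<Rightarrow> bool list \<Rightarrow> nat" where
  "tot M x = card (paths M x) - 1"

definition SharpP :: "(bool list \<Rightarrow> nat) set" where
  "SharpP = {f. \<exists>M. nptm M \<and> f = acc M}"

definition TotP :: "(bool list \<Rightarrow> nat) set" where
  "TotP = {f. \<exists>M. nptm M \<and> f = tot M}"

definition ModP :: "nat \<Rightarrow> bool list set set" where
  "ModP k = {L. \<exists>f \<in> SharpP. \<forall>x. x \<in> L \<longleftrightarrow> f x mod k \<noteq> 0}"

definition ModtotP :: "nat \<Rightarrow> bool list set set" where
  "ModtotP k = {L. \<exists>f \<in> TotP. \<forall>x. x \<in> L \<longleftrightarrow> f x mod k \<noteq> 0}"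

end

theory Submission
  imports Defs
begin


definition paths_from :: "ntm \<Rightarrow> config \<Rightarrow> config list set" where
 "paths_from M c = {cs. cs \<noteq> [] \<and> hd cs = c \<and> (\<forall>i. Suc i < length cs \<longrightarrow> step M (cs!i) (cs ! Suc i)) \<and> halted M (last cs)}"

lemma paths_eq: "paths M x = paths_from M (init M x)"
  by (simp add: paths_def paths_from_def is_path_def)

definition pf :: "ntm \<Rightarrow> (config \<Rightarrow> bool) \<Rightarrow> config \<Rightarrow> config list set" where
  "pf M P c = {cs \<in> paths_from M c. P (last cs)}"

lemma paths_from_halted: "halted M c \<Longrightarrow> paths_from M c = {[c]}"
proof (intro set_eqI iffI)
  fix cs assume h: "halted M c" and cs: "cs \<in> paths_from M c"
  then obtain rest where cs1: "cs = c # rest" unfolding paths_from_def by (cases cs) auto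
  have "rest = []"
  proof (rule ccontr)
    assume "rest \<noteq> []"
    then have "step M (cs!0) (cs!Suc 0)" using cs cs1 unfolding paths_from_def by auto
    then have "\<exists>c'. step M c c'" using cs1 by (metis nth_Cons_0)
    then show False using h unfolding halted_def by blast
  qed
  then show "cs \<in> {[c]}" using cs1 by simp
next
  fix cs assume "halted M c" "cs \<in> {[c]}" then show "cs \<in> paths_from M c"
    unfolding paths_from_def by auto
qed

lemma paths_from_step: "\<not> halted M c \<Longrightarrow> paths_from M c = (\<Union>c'\<in>{c'. step M c c'}. (#) c ` paths_from M c')"
proof (intro set_eqI iffI)
  fix cs assume h: "\<not> halted M c" and cs: "cs \<in> paths_from M c"
  then obtain rest where cs1: "cs = c # rest" unfolding paths_from_def by (cases cs) auto
  have rn: "rest \<noteq> []" using h cs cs1 unfolding paths_from_def by auto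
  have steps: "\<And>i. Suc i < length cs \<Longrightarrow> step M (cs!i) (cs ! Suc i)"
    using cs unfolding paths_from_def by blast
  have "step M (cs!0) (cs!Suc 0)" using rn cs1 by (intro steps) simp
  then have st: "step M c (hd rest)" using cs1 rn by (simp add: hd_conv_nth)
  have "\<forall>i. Suc i < length rest \<longrightarrow> step M (rest!i) (rest ! Suc i)"
  proof (intro allI impI)
    fix i assume "Suc i < length rest"
    then have "step M (cs!Suc i) (cs!Suc (Suc i))" using cs1 by (intro steps) simp
    then show "step M (rest!i) (rest ! Suc i)" using cs1 by simp
  qed
  moreover have "halted M (last rest)" using cs cs1 rn unfolding paths_from_def by simp
  ultimately have "rest \<in> paths_from M (hd rest)" using rn unfolding paths_from_def by simp
  then show "cs \<in> (\<Union>c'\<in>{c'. step M c c'}. (#) c ` paths_from M c')" using st cs1 by blast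
next
  fix cs assume h: "\<not> halted M c" and cs: "cs \<in> (\<Union>c'\<in>{c'. step M c c'}. (#) c ` paths_from M c')"
  then obtain c' rest where st: "step M c c'" and r: "rest \<in> paths_from M c'" and cs1: "cs = c # rest" by auto
  have rn: "rest \<noteq> []" "hd rest = c'" using r unfolding paths_from_def by auto
  have "\<forall>i. Suc i < length cs \<longrightarrow> step M (cs!i) (cs ! Suc i)"
  proof (intro allI impI)
    fix i assume "Suc i < length cs"
    then show "step M (cs!i) (cs ! Suc i)" using st r rn cs1 unfolding paths_from_def
      by (cases i) (auto simp: hd_conv_nth)
  qed
  then show "cs \<in> paths_from M c" using r rn cs1 unfolding paths_from_def by auto
qed

lemma pf_halted: "halted M c \<Longrightarrow> pf M P c = (if P c then {[c]} else {})"
  by (auto simp: pf_def paths_from_halted)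

lemma paths_from_ne: "cs \<in> paths_from M c \<Longrightarrow> cs \<noteq> []"
  by (simp add: paths_from_def)

lemma pf_step: "\<not> halted M c \<Longrightarrow> pf M P c = (\<Union>c'\<in>{c'. step M c c'}. (#) c ` pf M P c')"
  unfolding pf_def using paths_from_step[of M c] paths_from_ne
  by (auto simp: image_iff)

lemma succ_finite: "finite (delta M) \<Longrightarrow> finite {c'. step M c c'}"
proof -
  assume f: "finite (delta M)"
  obtain q h t where c: "c = (q,h,t)" by (cases c) auto
  have "{c'. step M c c'} \<subseteq> (\<lambda>(q0,a,q',b,d). (q', h+d, t(h:=b))) ` delta M"
    unfolding c step_def by (auto simp: image_iff) (metis case_prod_conv)
  then show ?thesis using f finite_subset by blast
qed

lemma pf_hd: "p \<in> pf M P c' \<Longrightarrow> hd p = c'"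
  by (simp add: pf_def paths_from_def)

lemma pf_card_step:
  assumes f: "finite (delta M)" and nh: "\<not> halted M c" and fin: "\<And>c'. step M c c' \<Longrightarrow> finite (pf M P c')"
  shows "finite (pf M P c) \<and> card (pf M P c) = (\<Sum>c'\<in>{c'. step M c c'}. card (pf M P c'))"
proof -
  have e: "pf M P c = (\<Union>c'\<in>{c'. step M c c'}. (#) c ` pf M P c')" using pf_step[OF nh] .
  have "card (\<Union>c'\<in>{c'. step M c c'}. (#) c ` pf M P c') = (\<Sum>c'\<in>{c'. step M c c'}. card ((#) c ` pf M P c'))"
  proof (rule card_UN_disjoint)
    show "finite {c'. step M c c'}" using succ_finite[OF f] .
    show "\<forall>i\<in>{c'. step M c c'}. finite ((#) c ` pf M P i)" using fin by auto
    show "\<forall>i\<in>{c'. step M c c'}. \<forall>j\<in>{c'. step M c c'}. i \<noteq> j \<longrightarrow> (#) c ` pf M P i \<inter> (#) c ` pf M P j = {}"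
      using pf_hd by blast
  qed
  also have "\<dots> = (\<Sum>c'\<in>{c'. step M c c'}. card (pf M P c'))"
    by (rule sum.cong) (auto simp: card_image)
  finally show ?thesis using e succ_finite[OF f] fin by auto
qed

definition bnd :: "ntm \<Rightarrow> nat \<Rightarrow> config \<Rightarrow> bool" where
  "bnd M N c \<longleftrightarrow> (\<forall>m c'. (step M ^^ m) c c' \<longrightarrow> m \<le> N)"

lemma bnd_succ: "bnd M (Suc N) c \<Longrightarrow> step M c c' \<Longrightarrow> bnd M N c'"
  unfolding bnd_def by (meson Suc_le_mono relpowp_Suc_I2)

lemma bnd_0: "bnd M 0 c \<Longrightarrow> halted M c"
  unfolding bnd_def halted_def by (metis One_nat_def not_one_le_zero relpowp_1)

lemma pf_finite: "finite (delta M) \<Longrightarrow> bnd M N c \<Longrightarrow> finite (pf M P c)"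
proof (induction N arbitrary: c)
  case 0 then show ?case by (simp add: bnd_0 pf_halted)
next
  case (Suc N) then show ?case
  proof (cases "halted M c")
    case False then show ?thesis using pf_card_step[OF Suc(2) False] Suc bnd_succ by blast
  qed (simp add: pf_halted)
qed

lemma pf_card_pos: "finite (delta M) \<Longrightarrow> bnd M N c \<Longrightarrow> card (pf M (\<lambda>_. True) c) \<ge> 1"
proof (induction N arbitrary: c)
  case 0 then show ?case by (simp add: bnd_0 pf_halted)
next
  case (Suc N)
  show ?case
  proof (cases "halted M c")
    case True then show ?thesis by (simp add: pf_halted)
  next
    case False
    then obtain c' where s: "step M c c'" unfolding halted_def by auto
    have fin: "finite {c'. step M c c'}" using succ_finite Suc by blast
    have "card (pf M (\<lambda>_. True) c) = (\<Sum>c'\<in>{c'. step M c c'}. card (pf M (\<lambda>_. True) c'))"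
      using pf_card_step[OF Suc(2) False] pf_finite Suc bnd_succ by blast
    also have "\<dots> \<ge> card (pf M (\<lambda>_. True) c')"
      using s fin by (intro member_le_sum) auto
    finally show ?thesis using Suc bnd_succ s by fastforce
  qed
qed



definition Qs :: "ntm \<Rightarrow> nat set" where
  "Qs M = insert (start M) ((\<lambda>(q,a,q',b,d). q) ` delta M \<union> (\<lambda>(q,a,q',b,d). q') ` delta M)"
definition Sg :: "ntm \<Rightarrow> nat set" where
  "Sg M = {0,1,2} \<union> (\<lambda>(q,a,q',b,d). a) ` delta M \<union> (\<lambda>(q,a,q',b,d). b) ` delta M"
definition s0 :: "ntm \<Rightarrow> nat" where "s0 M = Suc (Max (Qs M))"

definition ext :: "ntm \<Rightarrow> nat \<Rightarrow> nat \<Rightarrow> nat set \<Rightarrow> ntm" where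
"ext M m r A = (| delta = delta M \<union> {(s0 M, a, start M, a, 0) | a. a \<le> 2}
    \<union> {(s0 M, a, s0 M + 1 + j, a, 0) | a j. a \<le> 2 \<and> j < m}
    \<union> {(q, a, s0 M + 1 + j, a, 0) | q a j. q \<in> Qs M \<and> q \<notin> accepting M \<and> a \<in> Sg M
          \<and> \<not>(\<exists>q' b d. (q,a,q',b,d) \<in> delta M) \<and> j < r},
   start = s0 M, accepting = A |)"

definition invc :: "ntm \<Rightarrow> config \<Rightarrow> bool" where
  "invc M c \<longleftrightarrow> fst c \<in> Qs M \<and> (\<forall>i. snd (snd c) i \<in> Sg M)"

definition tp :: "bool list \<Rightarrow> int \<Rightarrow> nat" where
  "tp x = (\<lambda>i. if 0 \<le> i \<and> i < int (length x) then (if x ! nat i then 2 else 1) else 0)"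

lemma init_tp: "init M x = (start M, 0, tp x)"
  by (simp add: init_def tp_def)

lemma tp_le: "tp x i \<le> 2"
  by (simp add: tp_def)

lemma finite_Qs: "finite (delta M) \<Longrightarrow> finite (Qs M)"
  by (simp add: Qs_def)

lemma finite_Sg: "finite (delta M) \<Longrightarrow> finite (Sg M)"
  by (simp add: Sg_def)

lemma Qs_lt: "finite (delta M) \<Longrightarrow> q \<in> Qs M \<Longrightarrow> q < s0 M"
  unfolding s0_def using finite_Qs Max_ge by (simp add: le_imp_less_Suc)

lemma halted_iff: "halted M (q,h,t) \<longleftrightarrow> \<not>(\<exists>q' b d. (q, t h, q', b, d) \<in> delta M)"
  unfolding halted_def step_def by auto

lemma step_iff: "step M (q,h,t) c' \<longleftrightarrow> (\<exists>q' b d. (q, t h, q', b, d) \<in> delta M \<and> c' = (q', h + d, t(h := b)))"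
  unfolding step_def by auto

lemma step_inv: "step M c c' \<Longrightarrow> invc M c \<Longrightarrow> invc M c'"
proof -
  assume s: "step M c c'" and i: "invc M c"
  obtain q h t where c: "c = (q,h,t)" by (cases c) auto
  from s obtain q' b d where tr: "(q, t h, q', b, d) \<in> delta M" and c': "c' = (q', h + d, t(h := b))"
    unfolding c step_iff by auto
  have "q' \<in> Qs M" using tr unfolding Qs_def by (force simp: image_iff)
  moreover have "b \<in> Sg M" using tr unfolding Sg_def by (force simp: image_iff)
  ultimately show ?thesis using i unfolding invc_def c c' by auto
qed

lemma init_inv: "invc M (init M x)"
  unfolding invc_def init_tp Qs_def Sg_def tp_def by auto

lemma ext_step:
  assumes f: "finite (delta M)" and q: "q \<in> Qs M"
  shows "step (ext M m r A) (q,h,t) c' \<longleftrightarrow> step M (q,h,t) c' \<or>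
     (halted M (q,h,t) \<and> q \<notin> accepting M \<and> t h \<in> Sg M \<and> (\<exists>j<r. c' = (s0 M + 1 + j, h, t)))"
proof -
  have "q \<noteq> s0 M" using Qs_lt[OF f q] by simp
  then show ?thesis unfolding step_iff halted_iff ext_def using q by auto
qed

lemma ext_fresh_halted:
  assumes f: "finite (delta M)"
  shows "halted (ext M m r A) (s0 M + 1 + j, h, t)"
proof -
  have "s0 M + 1 + j \<notin> Qs M" using Qs_lt[OF f] by fastforce
  then have "(s0 M + 1 + j, a, q', b, d) \<notin> delta M" for a q' b d
    unfolding Qs_def by (force simp: image_iff)
  then show ?thesis unfolding halted_iff ext_def using Qs_lt[OF f] by fastforce
qed

lemma ext_init_step:
  assumes f: "finite (delta M)"
  shows "step (ext M m r A) (init (ext M m r A) x) c' \<longleftrightarrow>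
     c' = init M x \<or> (\<exists>j<m. c' = (s0 M + 1 + j, 0, tp x))"
proof -
  have "s0 M \<notin> Qs M" using Qs_lt[OF f] by blast
  then have n: "(s0 M, a, q', b, d) \<notin> delta M" for a q' b d
    unfolding Qs_def by (force simp: image_iff)
  have t: "(tp x)(0 := tp x 0) = tp x" by simp
  show ?thesis unfolding init_tp step_iff ext_def using n tp_le[of x 0] \<open>s0 M \<notin> Qs M\<close>
    by (auto simp: t) (metis fun_upd_triv)+
qed

lemma ext_finite:
  assumes f: "finite (delta M)"
  shows "finite (delta (ext M m r A))"
proof -
  have 1: "{(s0 M, a, start M, a, 0::int) | a. a \<le> (2::nat)} = (\<lambda>a. (s0 M, a, start M, a, 0)) ` {..2::nat}" by auto
  have 2: "{(s0 M, a, s0 M + 1 + j, a, 0::int) | a j. a \<le> (2::nat) \<and> j < m} \<subseteq>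
     (\<lambda>(a,j). (s0 M, a, s0 M + 1 + j, a, 0)) ` ({..2::nat} \<times> {..<m})" by auto
  have 3: "{(q, a, s0 M + 1 + j, a, 0::int) | q a j. q \<in> Qs M \<and> q \<notin> accepting M \<and> a \<in> Sg M
          \<and> \<not>(\<exists>q' b d. (q,a,q',b,d) \<in> delta M) \<and> j < r} \<subseteq>
     (\<lambda>(q,a,j). (q, a, s0 M + 1 + j, a, 0)) ` (Qs M \<times> Sg M \<times> {..<r})" by (force simp: image_iff)
  show ?thesis unfolding ext_def using f 1 2 3 finite_Qs[OF f] finite_Sg[OF f]
    by (simp, meson finite_SigmaI finite_imageI finite_lessThan finite_subset finite_atMost)
qed

lemma halted_chain: "halted M c \<Longrightarrow> (step M ^^ n) c c' \<Longrightarrow> n = 0"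
proof (cases n)
  case (Suc n')
  assume h: "halted M c" and "(step M ^^ n) c c'"
  then obtain y where "step M c y" using Suc relpowp_Suc_D2 by metis
  then show ?thesis using h unfolding halted_def by blast
qed

lemma ext_chain:
  assumes f: "finite (delta M)"
  shows "invc M c \<Longrightarrow> (step (ext M m r A) ^^ n) c c' \<Longrightarrow> \<exists>k c''. (step M ^^ k) c c'' \<and> n \<le> k + 1"
proof (induction n arbitrary: c)
  case 0 then show ?case by (intro exI[of _ 0] exI[of _ c]) auto
next
  case (Suc n)
  from Suc.prems(2) obtain y where s: "step (ext M m r A) c y" and ch: "(step (ext M m r A) ^^ n) y c'"
    by (meson relpowp_Suc_D2)
  obtain q h t where c: "c = (q,h,t)" by (cases c) auto
  have q: "q \<in> Qs M" using Suc.prems(1) c by (simp add: invc_def)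
  from s[unfolded c ext_step[OF f q]] show ?case
  proof
    assume sm: "step M (q,h,t) y"
    then have "invc M y" using step_inv Suc.prems(1) c by blast
    then obtain k c'' where k: "(step M ^^ k) y c''" "n \<le> k + 1" using Suc.IH ch by blast
    have r: "(step M ^^ Suc k) c c''" unfolding c by (rule relpowp_Suc_I2[OF sm k(1)])
    have le: "Suc n \<le> Suc k + 1" using k(2) by simp
    show ?case using r le by blast
  next
    assume "halted M (q, h, t) \<and> q \<notin> accepting M \<and> t h \<in> Sg M \<and> (\<exists>j<r. y = (s0 M + 1 + j, h, t))"
    then obtain j where "y = (s0 M + 1 + j, h, t)" by blast
    then have "n = 0" using halted_chain[OF ext_fresh_halted[OF f] ] ch by blast
    then show ?case by (intro exI[of _ 0] exI[of _ c]) auto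
  qed
qed

lemma arith_bound: "(c0::nat) * l ^ c0 + c0 + 2 \<le> (c0 + 2) * l ^ (c0 + 2) + (c0 + 2)"
proof (cases "l = 0")
  case True then show ?thesis by (cases c0) auto
next
  case False
  then have "l ^ c0 \<le> l ^ (c0 + 2)" by (simp add: power_increasing)
  then have "c0 * l ^ c0 \<le> (c0 + 2) * l ^ (c0 + 2)" by (intro mult_le_mono) auto
  then show ?thesis by simp
qed

lemma nptm_ext: "nptm M \<Longrightarrow> nptm (ext M m r A)"
proof -
  assume n: "nptm M"
  then have f: "finite (delta M)" by (simp add: nptm_def)
  from n obtain c0 where b: "\<And>x n cfg. (step M ^^ n) (init M x) cfg \<Longrightarrow> n \<le> c0 * length x ^ c0 + c0"
    unfolding nptm_def by blast
  have dirs: "\<forall>(q, a, q', b, d) \<in> delta (ext M m r A). d \<in> {-1, 0, 1}"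
    using n unfolding nptm_def ext_def by auto
  have "(step (ext M m r A) ^^ n) (init (ext M m r A) x) cfg \<Longrightarrow> n \<le> (c0+2) * length x ^ (c0+2) + (c0+2)" for x n cfg
  proof (cases n)
    case 0 then show ?thesis by simp
  next
    case (Suc n')
    assume "(step (ext M m r A) ^^ n) (init (ext M m r A) x) cfg"
    then obtain y where s: "step (ext M m r A) (init (ext M m r A) x) y" and ch: "(step (ext M m r A) ^^ n') y cfg"
      using Suc by (meson relpowp_Suc_D2)
    from s[unfolded ext_init_step[OF f]] have "n' \<le> c0 * length x ^ c0 + c0 + 1"
    proof
      assume "y = init M x"
      then obtain k c'' where "(step M ^^ k) (init M x) c''" "n' \<le> k + 1"
        using ext_chain[OF f init_inv] ch by blast
      then show ?thesis using b by fastforce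
    next
      assume "\<exists>j<m. y = (s0 M + 1 + j, 0, tp x)"
      then have "n' = 0" using halted_chain[OF ext_fresh_halted[OF f]] ch by blast
      then show ?thesis by simp
    qed
    then show ?thesis using Suc arith_bound[of c0 "length x"] by simp
  qed
  then show ?thesis using ext_finite[OF f] dirs unfolding nptm_def by blast
qed



lemma paths_from_delta: "delta M' = delta M \<Longrightarrow> paths_from M' = paths_from M"
proof -
  assume d: "delta M' = delta M"
  have s: "step M' = step M" using d by (intro ext) (simp add: step_def)
  show ?thesis unfolding paths_from_def halted_def s by simp
qed

lemma pf_True: "pf M (\<lambda>_. True) c = paths_from M c" by (simp add: pf_def)

abbreviation AC where "AC M \<equiv> (\<lambda>c::config. fst c \<in> accepting M)"
abbreviation NAC where "NAC M \<equiv> (\<lambda>c::config. fst c \<notin> accepting M)"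

lemma core_halted:
  assumes f: "finite (delta M)" and r: "r > 0" and h: "halted M c" and i: "invc M c"
  shows "finite (pf (ext M m r A) (\<lambda>_. True) c) \<and> card (pf (ext M m r A) (\<lambda>_. True) c)
     = card (pf M (AC M) c) + r * card (pf M (NAC M) c)"
proof -
  obtain q h t where c: "c = (q,h,t)" by (cases c) auto
  have q: "q \<in> Qs M" and th: "t h \<in> Sg M" using i c by (auto simp: invc_def)
  show ?thesis
  proof (cases "q \<in> accepting M")
    case True
    then have "halted (ext M m r A) c" unfolding halted_def c ext_step[OF f q] using h c
      by (auto simp: halted_def)
    then show ?thesis using True h c by (simp add: pf_halted)
  next
    case False
    let ?g = "\<lambda>j. (s0 M + 1 + j, h, t)"
    have S: "{c'. step (ext M m r A) c c'} = ?g ` {..<r}"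
    proof -
      have hs: "\<And>y. \<not> step M (q,h,t) y" using h c unfolding halted_def by blast
      show ?thesis unfolding c ext_step[OF f q] using h c False th hs by auto
    qed
    have "?g 0 \<in> {c'. step (ext M m r A) c c'}" using S r by blast
    then have nh: "\<not> halted (ext M m r A) c" unfolding halted_def by blast
    have fin: "finite (pf (ext M m r A) (\<lambda>_. True) c')" if "step (ext M m r A) c c'" for c'
    proof -
      from that S obtain j where "c' = ?g j" by blast
      then show ?thesis using ext_fresh_halted[OF f] by (simp add: pf_halted)
    qed
    have "card (pf (ext M m r A) (\<lambda>_. True) c) = (\<Sum>c'\<in>?g ` {..<r}. card (pf (ext M m r A) (\<lambda>_. True) c'))"
      using pf_card_step[OF ext_finite[OF f] nh fin] S by simp
    also have "\<dots> = (\<Sum>j<r. card (pf (ext M m r A) (\<lambda>_. True) (?g j)))"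
      by (rule sum.reindex_cong[where l = ?g]) (auto simp: inj_on_def)
    also have "\<dots> = r" using ext_fresh_halted[OF f] by (simp add: pf_halted)
    finally show ?thesis using pf_card_step[OF ext_finite[OF f] nh fin] False h c by (simp add: pf_halted)
  qed
qed

lemma core:
  assumes f: "finite (delta M)" and r: "r > 0"
  shows "bnd M N c \<Longrightarrow> invc M c \<Longrightarrow> finite (pf (ext M m r A) (\<lambda>_. True) c) \<and> card (pf (ext M m r A) (\<lambda>_. True) c)
     = card (pf M (AC M) c) + r * card (pf M (NAC M) c)"
proof (induction N arbitrary: c)
  case 0 then show ?case using core_halted[OF f r] bnd_0 by blast
next
  case (Suc N)
  show ?case
  proof (cases "halted M c")
    case True then show ?thesis using core_halted[OF f r] Suc by blast
  next
    case False
    obtain q h t where c: "c = (q,h,t)" by (cases c) auto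
    have q: "q \<in> Qs M" using Suc.prems c by (auto simp: invc_def)
    have S: "{c'. step (ext M m r A) c c'} = {c'. step M c c'}"
      unfolding c ext_step[OF f q] using False c by auto
    have nh: "\<not> halted (ext M m r A) c" using False S unfolding halted_def by auto
    have IH: "finite (pf (ext M m r A) (\<lambda>_. True) c') \<and> card (pf (ext M m r A) (\<lambda>_. True) c')
     = card (pf M (AC M) c') + r * card (pf M (NAC M) c')" if "step M c c'" for c'
      using Suc.IH[of c'] Suc.prems that bnd_succ step_inv by blast
    have fin: "finite (pf (ext M m r A) (\<lambda>_. True) c')" if "step (ext M m r A) c c'" for c'
      using IH that S by blast
    have finM: "finite (pf M P c')" if "step M c c'" for c' P
      using pf_finite[OF f] bnd_succ Suc.prems that by blast
    have "card (pf (ext M m r A) (\<lambda>_. True) c) = (\<Sum>c'\<in>{c'. step M c c'}. card (pf (ext M m r A) (\<lambda>_. True) c'))"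
      using pf_card_step[OF ext_finite[OF f] nh fin] S by simp
    also have "\<dots> = (\<Sum>c'\<in>{c'. step M c c'}. card (pf M (AC M) c') + r * card (pf M (NAC M) c'))"
      using IH by (intro sum.cong) auto
    also have "\<dots> = (\<Sum>c'\<in>{c'. step M c c'}. card (pf M (AC M) c')) + r * (\<Sum>c'\<in>{c'. step M c c'}. card (pf M (NAC M) c'))"
      by (simp add: sum.distrib sum_distrib_left)
    also have "\<dots> = card (pf M (AC M) c) + r * card (pf M (NAC M) c)"
      using pf_card_step[OF f False finM] by simp
    finally show ?thesis using pf_card_step[OF ext_finite[OF f] nh fin] by simp
  qed
qed

lemma ext_paths:
  assumes n: "nptm M" and r: "r > 0"
  shows "card (paths (ext M m r A) x) = card (pf M (AC M) (init M x)) + r * card (pf M (NAC M) (init M x)) + m"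
proof -
  have f: "finite (delta M)" using n by (simp add: nptm_def)
  from n obtain c0 where b: "\<And>n cfg. (step M ^^ n) (init M x) cfg \<Longrightarrow> n \<le> c0 * length x ^ c0 + c0"
    unfolding nptm_def by blast
  have bd: "bnd M (c0 * length x ^ c0 + c0) (init M x)" using b by (simp add: bnd_def)
  note C = core[OF f r bd init_inv, of m A]
  let ?M = "ext M m r A"
  let ?g = "\<lambda>j. (s0 M + 1 + j, 0::int, tp x)"
  have S: "{c'. step ?M (init ?M x) c'} = insert (init M x) (?g ` {..<m})"
    using ext_init_step[OF f] by auto
  have "step ?M (init ?M x) (init M x)" using S by blast
  then have nh: "\<not> halted ?M (init ?M x)" unfolding halted_def by blast
  have fin: "finite (pf ?M (\<lambda>_. True) c')" if "step ?M (init ?M x) c'" for c'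
  proof -
    from that S have "c' = init M x \<or> (\<exists>j<m. c' = ?g j)" by blast
    then show ?thesis using ext_fresh_halted[OF f] C by (auto simp: pf_halted)
  qed
  have ni: "init M x \<notin> ?g ` {..<m}"
    using Qs_lt[OF f, of "start M"] by (auto simp: init_tp Qs_def)
  have "card (paths ?M x) = (\<Sum>c'\<in>insert (init M x) (?g ` {..<m}). card (pf ?M (\<lambda>_. True) c'))"
    using pf_card_step[OF ext_finite[OF f] nh fin] S by (simp add: paths_eq pf_True)
  also have "\<dots> = card (pf ?M (\<lambda>_. True) (init M x)) + (\<Sum>c'\<in>?g ` {..<m}. card (pf ?M (\<lambda>_. True) c'))"
    using ni by (simp add: sum.insert)
  also have "(\<Sum>c'\<in>?g ` {..<m}. card (pf ?M (\<lambda>_. True) c')) = (\<Sum>j<m. card (pf ?M (\<lambda>_. True) (?g j)))"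
    by (rule sum.reindex_cong[where l = ?g]) (auto simp: inj_on_def)
  also have "\<dots> = m" using ext_fresh_halted[OF f] by (simp add: pf_halted)
  finally show ?thesis using C by simp
qed



lemma nptm_acc_upd: "nptm (M(|accepting := A|)) = nptm M"
proof -
  have s: "step (M(|accepting := A|)) = step M" by (intro ext) (simp add: step_def)
  have i: "init (M(|accepting := A|)) = init M" by (intro ext) (simp add: init_def)
  show ?thesis unfolding nptm_def s i by simp
qed

lemma bnd_init: "nptm M \<Longrightarrow> \<exists>N. bnd M N (init M x)"
  unfolding nptm_def bnd_def by blast

theorem proposition10:
  fixes k :: nat
  assumes "k \<ge> 2"
  shows "ModtotP k = ModP k"
proof (intro set_eqI iffI)
  fix L assume "L \<in> ModtotP k"
  then obtain M where n: "nptm M" and L: "\<forall>x. x \<in> L \<longleftrightarrow> tot M x mod k \<noteq> 0"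
    unfolding ModtotP_def TotP_def by blast
  have f: "finite (delta M)" using n by (simp add: nptm_def)
  define M0 where "M0 = M(|accepting := UNIV|)"
  define M1 where "M1 = ext M0 (k-1) 1 UNIV"
  have n0: "nptm M0" using n by (simp add: M0_def nptm_acc_upd)
  have n1: "nptm M1" unfolding M1_def using nptm_ext[OF n0] .
  have pfe: "paths_from M0 = paths_from M" by (rule paths_from_delta) (simp add: M0_def)
  have i0: "init M0 x = init M x" for x by (simp add: M0_def init_def)
  have a1: "acc M1 x = card (paths M x) + (k - 1)" for x
  proof -
    have "acc M1 x = card (paths M1 x)" by (simp add: acc_def M1_def ext_def)
    also have "\<dots> = card (pf M0 (AC M0) (init M0 x)) + 1 * card (pf M0 (NAC M0) (init M0 x)) + (k-1)"
      unfolding M1_def by (rule ext_paths[OF n0]) simp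
    also have "\<dots> = card (paths M x) + (k - 1)"
      by (simp add: pf_def M0_def pfe[unfolded M0_def] i0[unfolded M0_def] paths_eq)
    finally show ?thesis .
  qed
  have pos: "card (paths M x) \<ge> 1" for x
  proof -
    obtain N where "bnd M N (init M x)" using bnd_init[OF n, of x] by blast
    then have "card (pf M (\<lambda>_. True) (init M x)) \<ge> 1" by (rule pf_card_pos[OF f])
    then show ?thesis by (simp add: paths_eq pf_True)
  qed
  have "x \<in> L \<longleftrightarrow> acc M1 x mod k \<noteq> 0" for x
  proof -
    have "acc M1 x = tot M x + k" using pos[of x] assms unfolding a1 tot_def by simp
    then show ?thesis using L by simp
  qed
  then show "L \<in> ModP k" unfolding ModP_def SharpP_def using n1 by blast
next
  fix L assume "L \<in> ModP k"
  then obtain M where n: "nptm M" and L: "\<forall>x. x \<in> L \<longleftrightarrow> acc M x mod k \<noteq> 0"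
    unfolding ModP_def SharpP_def by blast
  define M2 where "M2 = ext M 1 k {}"
  have n2: "nptm M2" unfolding M2_def using nptm_ext[OF n] .
  have "tot M2 x = acc M x + k * card (pf M (NAC M) (init M x))" for x
    using ext_paths[OF n, of k 1 "{}" x] assms
    by (simp add: tot_def M2_def acc_def pf_def paths_eq)
  then have "x \<in> L \<longleftrightarrow> tot M2 x mod k \<noteq> 0" for x using L by simp
  then show "L \<in> ModtotP k" unfolding ModtotP_def TotP_def using n2 by blast
qed

end
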